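(* Let $(D=(V,A),c,r,K)$ be an instance of the node-weighted Directed Steiner Tree problem, $n=|V|$, and let $(x,f)$ be a feasible solution of (LP-DST). Let $S=\{v\in V:x_v>0\}$, $U=\{v\in V:x_v\ge1/\sqrt n\}$, $U'=S\setminus U$, and let $EX$ be the set of terminals $t\in K$ for which there is no directed path from $r$ to $t$ in $D[U]$. For $t\in EX$ let $X_t$ be the set of vertices $w\in U'$ such that there is a directed path from $w$ to $t$ in $D[U\cup\{w\}]$. Then $|X_t|\ge\sqrt n$ for every $t\in EX$.
   Context: For $v\in V$, $\mathcal P_v$ denotes the set of simple directed paths in $D$ from $r$ to $v$. (LP-DST) has variables $x_v$ ($v\in V$) and $f^t_P$ ($t\in K$, $P\in\mathcal P_t$) and constraints: $\sum_{P\in\mathcal P_t}f^t_P=1$ for all $t\in K$; $\sum_{P\in\mathcal P_t: v\in P}f^t_P\le x_v$ for all $v\in V$, $t\in K$; $0\le x_v\le 1$; $0\le f^t_P\le 1$ (objective: minimize $\sum_v x_vc(v)$). $D[W]$ is the subgraph induced by $W$. *)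

theory Defs
  imports Complex_Main
begin

definition is_path :: "('a \<times> 'a) set \<Rightarrow> 'a set \<Rightarrow> 'a list \<Rightarrow> 'a \<Rightarrow> 'a \<Rightarrow> bool" where
  "is_path A W p u v \<longleftrightarrow> p \<noteq> [] \<and> hd p = u \<and> last p = v \<and> set p \<subseteq> W \<and>
     (\<forall>i < length p - 1. (p ! i, p ! Suc i) \<in> A)"

definition simple_paths :: "'a set \<Rightarrow> ('a \<times> 'a) set \<Rightarrow> 'a \<Rightarrow> 'a \<Rightarrow> 'a list set" where
  "simple_paths V A u v = {p. is_path A V p u v \<and> distinct p}"

definition reachable_in :: "('a \<times> 'a) set \<Rightarrow> 'a set \<Rightarrow> 'a \<Rightarrow> 'a \<Rightarrow> bool" where
  "reachable_in A W u v \<longleftrightarrow> (\<exists>p. is_path A W p u v)"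

definition dst_instance :: "'a set \<Rightarrow> ('a \<times> 'a) set \<Rightarrow> ('a \<Rightarrow> real) \<Rightarrow> 'a \<Rightarrow> 'a set \<Rightarrow> bool" where
  "dst_instance V A c r K \<longleftrightarrow> finite V \<and> A \<subseteq> V \<times> V \<and> r \<in> V \<and> K \<subseteq> V \<and> (\<forall>v\<in>V. c v \<ge> 0)"

definition lp_dst_feasible :: "'a set \<Rightarrow> ('a \<times> 'a) set \<Rightarrow> 'a \<Rightarrow> 'a set \<Rightarrow>
    ('a \<Rightarrow> real) \<Rightarrow> ('a \<Rightarrow> 'a list \<Rightarrow> real) \<Rightarrow> bool" where
  "lp_dst_feasible V A r K x f \<longleftrightarrow>
     (\<forall>t\<in>K. (\<Sum>P\<in>simple_paths V A r t. f t P) = 1) \<and>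
     (\<forall>v\<in>V. \<forall>t\<in>K. (\<Sum>P\<in>{P \<in> simple_paths V A r t. v \<in> set P}. f t P) \<le> x v) \<and>
     (\<forall>v\<in>V. 0 \<le> x v \<and> x v \<le> 1) \<and>
     (\<forall>t\<in>K. \<forall>P\<in>simple_paths V A r t. 0 \<le> f t P \<and> f t P \<le> 1)"

end

theory Submission
  imports Defs
begin

lemma split_last_out:
  assumes "\<not> set P \<subseteq> U"
  shows "\<exists>ys w zs. P = ys @ w # zs \<and> w \<notin> U \<and> set zs \<subseteq> U"
  using assms
proof (induction P)
  case Nil then show ?case by simp
next
  case (Cons a P)
  show ?case
  proof (cases "set P \<subseteq> U")
    case True
    then have "a \<notin> U" using Cons.prems by auto
    then show ?thesis using True by (metis append_Nil)
  next
    case False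
    from Cons.IH[OF this] obtain ys w zs where "P = ys @ w # zs" "w \<notin> U" "set zs \<subseteq> U" by blast
    then show ?thesis by (metis append_Cons)
  qed
qed

lemma suffix_path:
  assumes "is_path A W (ys @ w # zs) u v" "set (w # zs) \<subseteq> W'"
  shows "is_path A W' (w # zs) w v"
proof -
  let ?p = "ys @ w # zs"
  have arcs: "\<forall>i < length ?p - 1. (?p ! i, ?p ! Suc i) \<in> A" and lv: "last ?p = v"
    using assms(1) unfolding is_path_def by auto
  have "(((w # zs) ! i), (w # zs) ! Suc i) \<in> A" if "i < length (w # zs) - 1" for i
  proof -
    have "length ys + i < length ?p - 1" using that by simp
    then have "(?p ! (length ys + i), ?p ! Suc (length ys + i)) \<in> A" using arcs by blast
    moreover have "?p ! (length ys + i) = (w # zs) ! i" by (simp add: nth_append)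
    moreover have "?p ! Suc (length ys + i) = (w # zs) ! Suc i"
      by (metis add_Suc_right nth_append_length_plus)
    ultimately show ?thesis by simp
  qed
  moreover have "last (w # zs) = v" using lv by simp
  ultimately show ?thesis using assms(2) unfolding is_path_def by auto
qed

theorem claim1:
  fixes V :: "'a set" and A :: "('a \<times> 'a) set" and c x :: "'a \<Rightarrow> real"
    and r :: 'a and K :: "'a set" and f :: "'a \<Rightarrow> 'a list \<Rightarrow> real"
  assumes "dst_instance V A c r K"
    and "lp_dst_feasible V A r K x f"
  defines "n \<equiv> card V"
  defines "S \<equiv> {v \<in> V. x v > 0}"
  defines "U \<equiv> {v \<in> V. x v \<ge> 1 / sqrt (real n)}"
  defines "U' \<equiv> S - U"
  defines "EXt \<equiv> {t \<in> K. \<not> reachable_in A U r t}"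
  shows "\<forall>t \<in> EXt. real (card {w \<in> U'. reachable_in A (U \<union> {w}) w t}) \<ge> sqrt (real n)"
proof
  fix t assume tE: "t \<in> EXt"
  have finV: "finite V" and rV: "r \<in> V" and KV: "K \<subseteq> V" using assms(1) unfolding dst_instance_def by auto
  have tK: "t \<in> K" and nreach: "\<not> reachable_in A U r t" using tE unfolding EXt_def by auto
  have sum1: "(\<Sum>P\<in>simple_paths V A r t. f t P) = 1"
    and cov: "\<And>v. v \<in> V \<Longrightarrow> (\<Sum>P\<in>{P \<in> simple_paths V A r t. v \<in> set P}. f t P) \<le> x v"
    and xnn: "\<And>v. v \<in> V \<Longrightarrow> 0 \<le> x v"
    and fnn: "\<And>P. P \<in> simple_paths V A r t \<Longrightarrow> 0 \<le> f t P"
    using assms(2) tK unfolding lp_dst_feasible_def by auto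
  define Ps where "Ps = simple_paths V A r t"
  have finPs: "finite Ps"
  proof (rule finite_subset[OF _ finite_lists_length_le[OF finV, of "card V"]])
    show "Ps \<subseteq> {xs. set xs \<subseteq> V \<and> length xs \<le> card V}"
    proof
      fix P assume "P \<in> Ps"
      then have "set P \<subseteq> V" "distinct P" unfolding Ps_def simple_paths_def is_path_def by auto
      then show "P \<in> {xs. set xs \<subseteq> V \<and> length xs \<le> card V}"
        by (metis card_mono distinct_card finV mem_Collect_eq)
    qed
  qed
  define X where "X = {w \<in> U'. reachable_in A (U \<union> {w}) w t}"
  have finX: "finite X" unfolding X_def U'_def S_def using finV by auto
  define g where "g P = (SOME w. \<exists>ys zs. P = ys @ w # zs \<and> w \<notin> U \<and> set zs \<subseteq> U)" for P
  have gprop: "\<exists>ys zs. P = ys @ g P # zs \<and> g P \<notin> U \<and> set zs \<subseteq> U" if "P \<in> Ps" for P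
  proof -
    have ip: "is_path A V P r t" using that unfolding Ps_def simple_paths_def by auto
    have "\<not> set P \<subseteq> U"
    proof
      assume "set P \<subseteq> U"
      then have "is_path A U P r t" using ip unfolding is_path_def by auto
      then show False using nreach unfolding reachable_in_def by auto
    qed
    from split_last_out[OF this] obtain ys w zs where "P = ys @ w # zs \<and> w \<notin> U \<and> set zs \<subseteq> U" by blast
    then have "\<exists>w. \<exists>ys zs. P = ys @ w # zs \<and> w \<notin> U \<and> set zs \<subseteq> U" by blast
    from someI_ex[OF this] show ?thesis unfolding g_def .
  qed
  define Ps' where "Ps' = {P \<in> Ps. f t P > 0}"
  have finPs': "finite Ps'" using finPs unfolding Ps'_def by auto
  have gX: "g P \<in> X" if "P \<in> Ps'" for P
  proof -
    have PPs: "P \<in> Ps" and fpos: "f t P > 0" using that unfolding Ps'_def by auto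
    obtain ys zs where dec: "P = ys @ g P # zs" "g P \<notin> U" "set zs \<subseteq> U" using gprop[OF PPs] by blast
    have ip: "is_path A V P r t" using PPs unfolding Ps_def simple_paths_def by auto
    have gin: "g P \<in> set P" using dec(1) by (metis in_set_conv_decomp)
    then have gV: "g P \<in> V" using ip unfolding is_path_def by auto
    have "is_path A (U \<union> {g P}) (g P # zs) (g P) t"
      using suffix_path[of A V ys "g P" zs r t] ip dec by auto
    then have reach: "reachable_in A (U \<union> {g P}) (g P) t" unfolding reachable_in_def by blast
    have "f t P \<le> (\<Sum>Q\<in>{Q \<in> simple_paths V A r t. g P \<in> set Q}. f t Q)"
      by (rule member_le_sum) (use PPs gin finPs fnn in \<open>auto simp: Ps_def\<close>)
    also have "\<dots> \<le> x (g P)" using cov[OF gV] .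
    finally have "x (g P) > 0" using fpos by simp
    then show ?thesis unfolding X_def U'_def S_def using gV dec(2) reach by auto
  qed
  have "1 = (\<Sum>P\<in>Ps. f t P)" using sum1 unfolding Ps_def by simp
  also have "\<dots> = (\<Sum>P\<in>Ps'. f t P)"
    by (rule sum.mono_neutral_right) (use finPs fnn in \<open>force simp: Ps'_def Ps_def less_le\<close>)+
  also have "\<dots> = (\<Sum>w\<in>X. \<Sum>P\<in>{P. P \<in> Ps' \<and> g P = w}. f t P)"
    by (rule sum.group[symmetric]) (use finPs' finX gX in auto)
  also have "\<dots> \<le> (\<Sum>w\<in>X. x w)"
  proof (rule sum_mono)
    fix w assume wX: "w \<in> X"
    then have wV: "w \<in> V" unfolding X_def U'_def S_def by auto
    have "(\<Sum>P\<in>{P. P \<in> Ps' \<and> g P = w}. f t P) \<le> (\<Sum>P\<in>{P \<in> Ps. w \<in> set P}. f t P)"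
    proof (rule sum_mono2)
      show "finite {P \<in> Ps. w \<in> set P}" using finPs by auto
      show "{P. P \<in> Ps' \<and> g P = w} \<subseteq> {P \<in> Ps. w \<in> set P}"
      proof
        fix P assume "P \<in> {P. P \<in> Ps' \<and> g P = w}"
        then have "P \<in> Ps" "g P = w" unfolding Ps'_def by auto
        then show "P \<in> {P \<in> Ps. w \<in> set P}" using gprop[of P] by (metis (mono_tags, lifting) in_set_conv_decomp mem_Collect_eq)
      qed
      show "\<And>b. b \<in> {P \<in> Ps. w \<in> set P} - {P. P \<in> Ps' \<and> g P = w} \<Longrightarrow> 0 \<le> f t b"
        using fnn unfolding Ps_def by auto
    qed
    also have "\<dots> \<le> x w" using cov[OF wV] unfolding Ps_def by simp
    finally show "(\<Sum>P\<in>{P. P \<in> Ps' \<and> g P = w}. f t P) \<le> x w" .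
  qed
  also have "\<dots> \<le> of_nat (card X) * (1 / sqrt (real n))"
  proof (rule sum_bounded_above)
    fix w assume "w \<in> X"
    then show "x w \<le> 1 / sqrt (real n)" unfolding X_def U'_def S_def U_def by auto
  qed
  finally have le: "1 \<le> real (card X) / sqrt (real n)" by simp
  have "n > 0" unfolding n_def using finV rV card_gt_0_iff by blast
  then have "sqrt (real n) > 0" by simp
  with le have "sqrt (real n) \<le> real (card X)" by (simp add: field_simps)
  then show "real (card {w \<in> U'. reachable_in A (U \<union> {w}) w t}) \<ge> sqrt (real n)"
    unfolding X_def by simp
qed

end
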